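(* Let $f_N=\sum_{k=0}^{N}\binom{N}{k}^3$ denote the $N$-th Franel number. For every non-negative integer $n$, $$v_2(f_{2n+1})\ge 1+v_2\Big(\binom{2n}{n}\Big),\qquad v_2(f_{2n})\ge v_2\Big(\binom{2n}{n}\Big).$$
   Context: $v_2(y)$ denotes the $2$-adic valuation of an integer $y$, i.e. the exponent of the highest power of $2$ dividing $y$. *)

theory Defs
  imports "HOL-Computational_Algebra.Computational_Algebra"
begin

definition franel :: "nat \<Rightarrow> nat" where
  "franel N = (\<Sum>k=0..N. (N choose k) ^ 3)"

end

theory Submission
  imports Defs
begin

definition w :: "nat \<Rightarrow> nat" where "w m = multiplicity (2::nat) (fact m)"

lemma mult_distrib2: "(x::nat) \<noteq> 0 \<Longrightarrow> y \<noteq> 0 \<Longrightarrow>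
   multiplicity (2::nat) (x * y) = multiplicity 2 x + multiplicity 2 y"
  by (rule prime_elem_multiplicity_mult_distrib) auto

lemma w_Suc: "w (Suc m) = multiplicity 2 (Suc m) + w m"
proof -
  have "(fact (Suc m) :: nat) = Suc m * fact m" by (simp only: fact_Suc of_nat_id)
  then show ?thesis unfolding w_def by (metis mult_distrib2 fact_nonzero nat.distinct(1))
qed

lemma w_double: "w (2*m) = m + w m"
proof (induction m)
  case 0 then show ?case by (simp add: w_def)
next
  case (Suc m)
  have e: "2 * Suc m = Suc (Suc (2*m))" by simp
  have o: "multiplicity (2::nat) (Suc (2*m)) = 0"
    by (rule not_dvd_imp_multiplicity_0) presburger
  have t: "multiplicity (2::nat) (Suc (Suc (2*m))) = Suc (multiplicity 2 (Suc m))"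
  proof -
    have "Suc (Suc (2*m)) = 2 * Suc m" by simp
    moreover have "multiplicity (2::nat) (2 * Suc m) = Suc (multiplicity 2 (Suc m))"
      by (rule multiplicity_times_same) auto
    ultimately show ?thesis by simp
  qed
  show ?case unfolding e w_Suc o t using Suc.IH by (simp add: w_Suc)
qed

lemma w_odd: "w (Suc (2*m)) = w (2*m)"
proof -
  have o: "multiplicity (2::nat) (Suc (2*m)) = 0"
    by (rule not_dvd_imp_multiplicity_0) presburger
  show ?thesis by (simp add: w_Suc o)
qed

lemma w_add: "w a + w b \<le> w (a + b)"
proof -
  have "fact a * fact b dvd (fact (a+b) :: nat)"
    using binomial_fact_lemma[of a "a+b"] by (metis add_diff_cancel_left' dvd_triv_left le_add1 mult.commute)
  then have "multiplicity (2::nat) (fact a * fact b) \<le> multiplicity 2 (fact (a+b) :: nat)"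
    by (rule dvd_imp_multiplicity_le) simp
  then show ?thesis unfolding w_def by (simp add: mult_distrib2)
qed

lemma mchoose: "k \<le> n \<Longrightarrow> multiplicity (2::nat) (n choose k) + w k + w (n - k) = w n"
proof -
  assume k: "k \<le> n"
  have "fact k * fact (n - k) * (n choose k) = (fact n :: nat)" using binomial_fact_lemma[OF k] .
  then have "multiplicity (2::nat) (fact k * fact (n - k) * (n choose k)) = w n" by (simp add: w_def)
  moreover have "(n choose k) \<noteq> 0" using k by simp
  ultimately show ?thesis by (simp add: mult_distrib2 w_def)
qed

lemma pointwise:
  assumes kn: "k \<le> n" and jn: "j \<le> n"
  shows "(n choose k)^2 * ((k choose j) * (k choose (n-j)))
       = (n choose j)^2 * ((if j \<le> k then (n-j) choose (k-j) else 0) * (j choose (n-k)))"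
proof (cases "j \<le> k \<and> n - j \<le> k")
  case True
  have a: "(n choose k) * (k choose j) = (n choose j) * ((n-j) choose (k-j))"
    using choose_mult[of j k n] True kn by simp
  have b0: "(n choose k) * (k choose (n-j)) = (n choose (n-j)) * ((n-(n-j)) choose (k-(n-j)))"
    using choose_mult[of "n-j" k n] True kn by simp
  have c: "n choose (n-j) = n choose j" using binomial_symmetric[OF jn] by simp
  have d: "(j choose (k-(n-j))) = j choose (n-k)"
  proof -
    have "k - (n-j) \<le> j" using kn by simp
    then have "j choose (k-(n-j)) = j choose (j - (k-(n-j)))" by (rule binomial_symmetric)
    moreover have "j - (k-(n-j)) = n - k" using True kn jn by arith
    ultimately show ?thesis by simp
  qed
  have b: "(n choose k) * (k choose (n-j)) = (n choose j) * (j choose (n-k))"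
    using b0 c d jn by simp
  have "(n choose k)^2 * ((k choose j) * (k choose (n-j)))
      = ((n choose k) * (k choose j)) * ((n choose k) * (k choose (n-j)))"
    by (simp add: power2_eq_square ac_simps)
  also have "\<dots> = (n choose j)^2 * (((n-j) choose (k-j)) * (j choose (n-k)))"
    unfolding a b by (simp add: power2_eq_square ac_simps)
  finally show ?thesis using True by simp
next
  case False
  show ?thesis
  proof (cases "j \<le> k")
    case False then show ?thesis by simp
  next
    case True
    then have h: "\<not> n - j \<le> k" using False by simp
    then have "j < n - k" by simp
    then show ?thesis using h by (simp add: binomial_eq_0)
  qed
qed

lemma inner:
  assumes jn: "j \<le> n"
  shows "(\<Sum>k\<le>n. (if j \<le> k then (n-j) choose (k-j) else 0) * (j choose (n-k))) = n choose j"
proof -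
  have "(\<Sum>k\<le>n. (if j \<le> k then (n-j) choose (k-j) else 0) * (j choose (n-k)))
      = (\<Sum>k\<in>{j..n}. ((n-j) choose (k-j)) * (j choose (n-k)))"
    by (rule sum.mono_neutral_cong_right) auto
  also have "\<dots> = (\<Sum>i\<in>{0..n-j}. ((n-j) choose i) * (j choose (n-j-i)))"
  proof -
    have "{j..n} = {0+j..(n-j)+j}" using jn by simp
    then have "(\<Sum>k\<in>{j..n}. ((n-j) choose (k-j)) * (j choose (n-k)))
       = (\<Sum>i\<in>{0..n-j}. ((n-j) choose (i+j-j)) * (j choose (n-(i+j))))"
      using sum.shift_bounds_cl_nat_ivl[of "\<lambda>k. ((n-j) choose (k-j)) * (j choose (n-k))" 0 j "n-j"]
      by simp
    then show ?thesis by (simp add: diff_diff_left ac_simps)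
  qed
  also have "\<dots> = ((n-j) + j) choose (n-j)"
    using vandermonde[of "n-j" j "n-j"] by (simp add: atLeast0AtMost)
  also have "\<dots> = n choose j" using jn binomial_symmetric[OF jn] by simp
  finally show ?thesis .
qed

lemma strehl: "franel n = (\<Sum>k\<le>n. (n choose k)^2 * ((2*k) choose n))"
proof -
  have "(\<Sum>k\<le>n. (n choose k)^2 * ((2*k) choose n))
      = (\<Sum>k\<le>n. \<Sum>j\<le>n. (n choose k)^2 * ((k choose j) * (k choose (n-j))))"
  proof (rule sum.cong[OF refl])
    fix k
    have "(\<Sum>j\<le>n. (k choose j) * (k choose (n-j))) = (k + k) choose n" by (rule vandermonde)
    then show "(n choose k)^2 * ((2*k) choose n) = (\<Sum>j\<le>n. (n choose k)^2 * ((k choose j) * (k choose (n-j))))"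
      by (metis mult_2 sum_distrib_left)
  qed
  also have "\<dots> = (\<Sum>j\<le>n. \<Sum>k\<le>n. (n choose k)^2 * ((k choose j) * (k choose (n-j))))"
    by (rule sum.swap)
  also have "\<dots> = (\<Sum>j\<le>n. \<Sum>k\<le>n. (n choose j)^2 * ((if j \<le> k then (n-j) choose (k-j) else 0) * (j choose (n-k))))"
    by (intro sum.cong refl pointwise) auto
  also have "\<dots> = (\<Sum>j\<le>n. (n choose j)^2 * (n choose j))"
    by (intro sum.cong refl) (simp add: sum_distrib_left[symmetric] inner)
  also have "\<dots> = franel n"
    by (simp add: franel_def atLeast0AtMost power3_eq_cube power2_eq_square ac_simps)
  finally show ?thesis by simp
qed

definition T :: "nat \<Rightarrow> nat \<Rightarrow> nat" where
  "T N k = (N choose k)^2 * ((2*k) choose N)"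

lemma mT: "k \<le> N \<Longrightarrow> N \<le> 2*k \<Longrightarrow>
  multiplicity (2::nat) (T N k) = 2 * multiplicity 2 (N choose k) + multiplicity 2 ((2*k) choose N)"
  unfolding T_def power2_eq_square by (simp add: mult_distrib2)

lemma dvd_from_mult: "n \<le> multiplicity (2::nat) x \<Longrightarrow> 2^n dvd x"
  by (rule multiplicity_dvd')

lemma even_term:
  assumes kN: "k \<le> 2*n"
  shows "2 ^ multiplicity (2::nat) ((2*n) choose n) dvd T (2*n) k"
proof (cases "2*k < 2*n")
  case True
  then show ?thesis by (simp add: T_def binomial_eq_0)
next
  case False
  have A: "multiplicity (2::nat) ((2*n) choose n) + w n + w (2*n-n) = w (2*n)"
    by (rule mchoose) simp
  have B: "multiplicity (2::nat) ((2*n) choose k) + w k + w (2*n-k) = w (2*n)"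
    by (rule mchoose) (rule kN)
  have C: "multiplicity (2::nat) ((2*k) choose (2*n)) + w (2*n) + w (2*k-2*n) = w (2*k)"
    by (rule mchoose) (use False in simp)
  have D: "w (2*n-k) + w (k-n) \<le> w n"
  proof -
    have "(2*n-k)+(k-n) = n" using False kN by simp
    then show ?thesis using w_add[of "2*n-k" "k-n"] by simp
  qed
  have E: "w (2*n-k) + w k \<le> w (2*n)"
  proof -
    have "(2*n-k)+k = 2*n" using kN by simp
    then show ?thesis using w_add[of "2*n-k" "k"] by simp
  qed
  have F: "w (2*k-2*n) = (k-n) + w (k-n)"
    using w_double[of "k-n"] by (simp add: diff_mult_distrib2)
  have G: "w (2*n) = n + w n" by (rule w_double)
  have H: "w (2*k) = k + w k" by (rule w_double)
  have M: "multiplicity (2::nat) (T (2*n) k) = 2 * multiplicity 2 ((2*n) choose k) + multiplicity 2 ((2*k) choose (2*n))"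
    by (rule mT) (use kN False in simp_all)
  have "multiplicity (2::nat) ((2*n) choose n) \<le> multiplicity (2::nat) (T (2*n) k)"
    using A B C D E F G H M False kN by simp
  then show ?thesis by (rule dvd_from_mult)
qed

lemma odd_term:
  assumes kN: "k \<le> 2*n+1"
  shows "2 ^ (1 + multiplicity (2::nat) ((2*n) choose n)) dvd T (2*n+1) k"
proof (cases "2*k < 2*n+1")
  case True
  then show ?thesis by (simp add: T_def binomial_eq_0)
next
  case False
  have A: "multiplicity (2::nat) ((2*n) choose n) + w n + w (2*n-n) = w (2*n)"
    by (rule mchoose) simp
  have B: "multiplicity (2::nat) ((2*n+1) choose k) + w k + w (2*n+1-k) = w (2*n+1)"
    by (rule mchoose) (rule kN)
  have C: "multiplicity (2::nat) ((2*k) choose (2*n+1)) + w (2*n+1) + w (2*k-(2*n+1)) = w (2*k)"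
    by (rule mchoose) (use False in simp)
  have D: "w (2*n+1-k) + w (k-n-1) \<le> w n"
  proof -
    have "(2*n+1-k)+(k-n-1) = n" using False kN by simp
    then show ?thesis using w_add[of "2*n+1-k" "k-n-1"] by simp
  qed
  have E: "w (2*n+1-k) + w k \<le> w (2*n+1)"
  proof -
    have "(2*n+1-k)+k = 2*n+1" using kN by simp
    then show ?thesis using w_add[of "2*n+1-k" "k"] by simp
  qed
  have F: "w (2*k-(2*n+1)) = (k-n-1) + w (k-n-1)"
  proof -
    have "2*k-(2*n+1) = Suc (2*(k-n-1))" using False by simp
    then show ?thesis using w_double[of "k-n-1"] w_odd[of "k-n-1"] by simp
  qed
  have G: "w (2*n) = n + w n" by (rule w_double)
  have G2: "w (2*n+1) = w (2*n)" using w_odd[of n] by simp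
  have H: "w (2*k) = k + w k" by (rule w_double)
  have M: "multiplicity (2::nat) (T (2*n+1) k) = 2 * multiplicity 2 ((2*n+1) choose k) + multiplicity 2 ((2*k) choose (2*n+1))"
    by (rule mT) (use kN False in simp_all)
  have "1 + multiplicity (2::nat) ((2*n) choose n) \<le> multiplicity (2::nat) (T (2*n+1) k)"
    using A B C D E F G G2 H M False kN by simp
  then show ?thesis by (rule dvd_from_mult)
qed

lemma franel_T: "franel N = (\<Sum>k\<le>N. T N k)"
  unfolding T_def by (rule strehl)

lemma franel_nz: "franel N \<noteq> 0"
  unfolding franel_def by (simp add: sum_eq_0_iff) (rule exI[of _ 0], simp)

lemma geI2: "2^m dvd franel N \<Longrightarrow> m \<le> multiplicity (2::nat) (franel N)"
  by (rule multiplicity_geI) (simp_all add: franel_nz)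

theorem corollary4:
  fixes n :: nat
  shows "multiplicity (2::nat) (franel (2*n+1)) \<ge> 1 + multiplicity (2::nat) ((2*n) choose n)
       \<and> multiplicity (2::nat) (franel (2*n)) \<ge> multiplicity (2::nat) ((2*n) choose n)"
proof
  show "multiplicity (2::nat) (franel (2*n+1)) \<ge> 1 + multiplicity (2::nat) ((2*n) choose n)"
    by (rule geI2) (unfold franel_T, intro dvd_sum odd_term, simp)
  show "multiplicity (2::nat) (franel (2*n)) \<ge> multiplicity (2::nat) ((2*n) choose n)"
    by (rule geI2) (unfold franel_T, intro dvd_sum even_term, simp)
qed

end
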